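(* Let $A\in\mathbb{R}^{n\times n}$ be Metzler and let $E\in\mathbb{R}^{n\times q}$, $C\in\mathbb{R}^{q\times n}$, $F\in\mathbb{R}^{q\times q}$ be entrywise nonnegative. Let $q=q_1+\dots+q_N$ and $$\boldsymbol{\Delta}^{\infty}:=\{\Delta=\mathrm{diag}(\Delta_1,\ldots,\Delta_N):\ \Delta_i\in\mathbb{C}^{q_i\times q_i},\ \|\Delta_i\|_\infty\le 1\},\qquad \mathcal{D}_\Delta:=\{\mathrm{diag}(d_1I_{q_1},\ldots,d_NI_{q_N}):\ d_i>0\}.$$ Consider the uncertain system $\dot x=Ax+Ew$, $z=Cx+Fw$, $w=\Delta z$. The following statements are equivalent: (i) The uncertain system is asymptotically stable for all $\Delta\in\boldsymbol{\Delta}^{\infty}$. (ii) There exist a vector $\lambda\in\mathbb{R}^n_{>0}$ and a matrix $D\in\mathcal{D}_\Delta$ such that $$\begin{bmatrix}A & E\\ C & F-I_q\end{bmatrix}\begin{bmatrix}\lambda\\ D\mathbf{1}_q\end{bmatrix}<0 .$$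
   Context: A real matrix is Metzler if all its off-diagonal entries are nonnegative. $\|\cdot\|_\infty$ is the matrix norm induced by the vector $\infty$-norm. $\mathbf{1}_q$ is the vector of ones. Vector inequalities are componentwise. The uncertain system is asymptotically stable for a given $\Delta$ if $I-F\Delta$ is invertible and $A+E\Delta(I-F\Delta)^{-1}C$ is Hurwitz stable. *)

theory Defs
  imports "HOL-Analysis.Analysis"
begin

text \<open>Matrices are HOL-Analysis matrices: M :: 'a^'cols^'rows, entry M$i$j.\<close>

definition metzler :: "real^'n^'n \<Rightarrow> bool" where
  "metzler A \<longleftrightarrow> (\<forall>i j. i \<noteq> j \<longrightarrow> 0 \<le> A$i$j)"

definition nonneg_mat :: "real^'c^'r \<Rightarrow> bool" where
  "nonneg_mat M \<longleftrightarrow> (\<forall>i j. 0 \<le> M$i$j)"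

definition cmat :: "real^'c^'r \<Rightarrow> complex^'c^'r" where
  "cmat M = (\<chi> i j. complex_of_real (M$i$j))"

definition hurwitz :: "complex^'n^'n \<Rightarrow> bool" where
  "hurwitz M \<longleftrightarrow> (\<forall>s v. v \<noteq> 0 \<and> M *v v = s *s v \<longrightarrow> Re s < 0)"

text \<open>The block structure q = q_1 + ... + q_N is given by a labelling blk of the
  index set 'q by block labels 'b. The uncertainty set: block-diagonal complex matrices
  whose diagonal blocks Delta_k have induced infinity-norm (max row sum of moduli) at most 1.\<close>
definition unc_set :: "('q::finite \<Rightarrow> 'b) \<Rightarrow> (complex^'q^'q) set" where
  "unc_set blk = {\<Delta>. (\<forall>i j. blk i \<noteq> blk j \<longrightarrow> \<Delta>$i$j = 0) \<and>
     (\<forall>k. \<forall>i. blk i = k \<longrightarrow> (\<Sum>j\<in>{j. blk j = k}. cmod (\<Delta>$i$j)) \<le> 1)}"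

definition asym_stable ::
  "real^'n^'n \<Rightarrow> real^'q^'n \<Rightarrow> real^'n^'q \<Rightarrow> real^'q^'q \<Rightarrow> complex^'q^'q \<Rightarrow> bool" where
  "asym_stable A E C F \<Delta> \<longleftrightarrow>
     invertible (mat 1 - cmat F ** \<Delta>) \<and>
     hurwitz (cmat A + cmat E ** \<Delta> ** matrix_inv (mat 1 - cmat F ** \<Delta>) ** cmat C)"

end

theory Submission
  imports Defs
begin


lemma cmat_mv: "(cmat M *v z) $ i = (\<Sum>j\<in>UNIV. complex_of_real (M$i$j) * z$j)"
  by (simp add: cmat_def matrix_vector_mult_def)

lemma cmat_bound:
  assumes "nonneg_mat M" "\<forall>j. cmod (z$j) \<le> y$j"
  shows "cmod ((cmat M *v z)$i) \<le> (M *v y)$i"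
proof -
  have "cmod ((cmat M *v z)$i) \<le> (\<Sum>j\<in>UNIV. cmod (complex_of_real (M$i$j) * z$j))"
    unfolding cmat_mv by (rule norm_sum)
  also have "\<dots> \<le> (\<Sum>j\<in>UNIV. M$i$j * y$j)"
  proof (rule sum_mono)
    fix j
    have "0 \<le> M$i$j" using assms(1) by (simp add: nonneg_mat_def)
    then show "cmod (complex_of_real (M$i$j) * z$j) \<le> M$i$j * y$j"
      using assms(2) by (simp add: norm_mult mult_left_mono)
  qed
  finally show ?thesis by (simp add: matrix_vector_mult_def)
qed

lemma unc_bound:
  assumes D: "\<Delta> \<in> unc_set blk" and z: "\<forall>j. cmod (z$j) \<le> t * d (blk j)" and t: "0 \<le> t"
    and dpos: "\<forall>k. 0 < d k"
  shows "cmod ((\<Delta> *v z)$i) \<le> t * d (blk i)"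
proof -
  let ?B = "{j. blk j = blk i}"
  have "(\<Delta> *v z)$i = (\<Sum>j\<in>UNIV. \<Delta>$i$j * z$j)" by (simp add: matrix_vector_mult_def)
  also have "\<dots> = (\<Sum>j\<in>?B. \<Delta>$i$j * z$j)"
    by (rule sum.mono_neutral_right) (use D in \<open>auto simp: unc_set_def\<close>)
  finally have eq: "(\<Delta> *v z)$i = (\<Sum>j\<in>?B. \<Delta>$i$j * z$j)" .
  have "cmod ((\<Delta> *v z)$i) \<le> (\<Sum>j\<in>?B. cmod (\<Delta>$i$j) * (t * d (blk i)))"
    unfolding eq
    by (rule order_trans[OF norm_sum], rule sum_mono) (use z in \<open>auto simp: norm_mult intro!: mult_left_mono\<close>, metis)
  also have "\<dots> = (\<Sum>j\<in>?B. cmod (\<Delta>$i$j)) * (t * d (blk i))" by (simp add: sum_distrib_right)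
  also have "\<dots> \<le> 1 * (t * d (blk i))"
    by (rule mult_right_mono) (use D t dpos in \<open>auto simp: unc_set_def less_imp_le\<close>)
  finally show ?thesis by simp
qed

lemma finite_argmax:
  fixes f :: "'a::finite \<Rightarrow> real"
  obtains j where "\<forall>k. f k \<le> f j"
proof -
  have "Max (range f) \<in> range f" by (rule Max_in) auto
  then obtain j where j: "f j = Max (range f)" by (metis rangeE)
  have "\<forall>k. f k \<le> f j" unfolding j by (intro allI Max_ge) auto
  then show ?thesis using that by blast
qed

lemma matrix_inv_props:
  fixes X :: "'a::field^'n^'n"
  assumes "invertible X"
  shows "X ** matrix_inv X = mat 1" "matrix_inv X ** X = mat 1"
  using someI_ex[OF assms[unfolded invertible_def]] unfolding matrix_inv_def by auto

lemma invertible_ker: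
  fixes X :: "'a::field^'n^'n"
  shows "invertible X \<longleftrightarrow> (\<forall>x. X *v x = 0 \<longrightarrow> x = 0)"
  by (simp add: invertible_left_inverse matrix_left_invertible_ker)

lemma mv_scale: "(M *v (t *\<^sub>R y))$j = t * (M *v y)$j" for M :: "real^'a::finite^'b"
  by (simp add: matrix_vector_mult_def sum_distrib_left algebra_simps)

lemma X_mv: "(mat 1 - M ** N) *v z = z - M *v (N *v z)" for M :: "'a::comm_ring_1^'b::finite^'c::finite"
  by (simp add: matrix_vector_mult_diff_rdistrib matrix_vector_mul_assoc)

lemma nonneg_mv: "nonneg_mat M \<Longrightarrow> \<forall>j. 0 \<le> y$j \<Longrightarrow> 0 \<le> (M *v y)$i"
  by (auto simp: matrix_vector_mult_def nonneg_mat_def intro!: sum_nonneg)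

lemma suff:
  fixes A :: "real^'n::finite^'n" and E :: "real^'q::finite^'n" and C :: "real^'n^'q"
    and F :: "real^'q^'q" and blk :: "'q \<Rightarrow> 'b"
  assumes mA: "metzler A" and nE: "nonneg_mat E" and nC: "nonneg_mat C" and nF: "nonneg_mat F"
    and lam: "\<forall>i. 0 < lam$i" and d: "\<forall>k. 0 < d k" and mu: "mu = (\<chi> j. d (blk j))"
    and h1: "\<forall>i. (A *v lam + E *v mu)$i < 0"
    and h2: "\<forall>j. (C *v lam + (F - mat 1) *v mu)$j < 0"
    and D: "\<Delta> \<in> unc_set blk"
  shows "asym_stable A E C F \<Delta>"
proof -
  have mup: "mu$j = d (blk j)" for j by (simp add: mu)
  have mupos: "0 < mu$j" for j using d mup by simp
  have h2': "(C *v lam)$j + (F *v mu)$j < mu$j" for j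
    using h2[rule_format, of j] by (simp add: matrix_vector_mult_diff_rdistrib)
  have Cl: "0 \<le> (C *v lam)$j" for j using nonneg_mv[OF nC] lam less_imp_le by blast
  have hF: "(F *v mu)$j < mu$j" for j using h2'[of j] Cl[of j] by linarith
  define X where "X = mat 1 - cmat F ** \<Delta>"
  have inv: "invertible X"
    unfolding invertible_ker
  proof (intro allI impI, rule ccontr)
    fix z assume Xz: "X *v z = 0" and nz: "z \<noteq> 0"
    obtain j0 where j0: "\<forall>j. cmod (z$j) / mu$j \<le> cmod (z$j0) / mu$j0"
      using finite_argmax[of "\<lambda>j. cmod (z$j) / mu$j"] by blast
    define t where "t = cmod (z$j0) / mu$j0"
    have t0: "0 \<le> t" unfolding t_def using mupos[of j0] by (simp add: divide_nonneg_pos)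
    have zb: "\<forall>j. cmod (z$j) \<le> t * d (blk j)"
    proof
      fix j have "cmod (z$j) / mu$j \<le> t" using j0 t_def by simp
      then show "cmod (z$j) \<le> t * d (blk j)" using mupos[of j] mup[of j] by (simp add: divide_le_eq)
    qed
    have zj0: "cmod (z$j0) = t * mu$j0" unfolding t_def using mupos[of j0] by simp
    have zeq: "z = cmat F *v (\<Delta> *v z)" using Xz unfolding X_def X_mv by simp
    have wb: "\<forall>j. cmod ((\<Delta> *v z)$j) \<le> (t *\<^sub>R mu)$j"
      using unc_bound[OF D zb t0 d] mup by simp
    have "cmod (z$j0) \<le> (F *v (t *\<^sub>R mu))$j0"
      using cmat_bound[OF nF wb, of j0] zeq by simp
    then have le: "t * mu$j0 \<le> t * (F *v mu)$j0" using zj0 by (simp add: mv_scale)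
    show False
    proof (cases "t = 0")
      case True
      then have "z = 0" using zb by (simp add: vec_eq_iff)
      then show False using nz by simp
    next
      case False
      then have "0 < t" using t0 by simp
      then show False using le hF[of j0] by (simp add: mult_le_cancel_left)
    qed
  qed
  have hur: "hurwitz (cmat A + cmat E ** \<Delta> ** matrix_inv X ** cmat C)"
    unfolding hurwitz_def
  proof (intro allI impI, elim conjE)
    fix s v assume nv: "v \<noteq> 0" and ev: "(cmat A + cmat E ** \<Delta> ** matrix_inv X ** cmat C) *v v = s *s v"
    define z where "z = matrix_inv X *v (cmat C *v v)"
    define w where "w = \<Delta> *v z"
    have "X *v z = cmat C *v v"
      unfolding z_def matrix_vector_mul_assoc matrix_mul_assoc matrix_inv_props(1)[OF inv] by simp
    then have zeq: "z = cmat C *v v + cmat F *v w" unfolding X_def X_mv w_def by (simp add: algebra_simps)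
    have "cmat A *v v + cmat E *v w = s *s v"
      using ev unfolding w_def z_def by (simp add: matrix_vector_mult_add_rdistrib matrix_vector_mul_assoc matrix_mul_assoc)
    then have veq: "s * v$i = (cmat A *v v)$i + (cmat E *v w)$i" for i
    proof -
      assume h: "cmat A *v v + cmat E *v w = s *s v"
      have "(s *s v)$i = (cmat A *v v + cmat E *v w)$i" by (simp only: h)
      then show ?thesis by simp
    qed
    obtain i0 where i0: "\<forall>i. cmod (v$i) / lam$i \<le> cmod (v$i0) / lam$i0"
      using finite_argmax[of "\<lambda>i. cmod (v$i) / lam$i"] by blast
    obtain j0 where j0: "\<forall>j. cmod (z$j) / mu$j \<le> cmod (z$j0) / mu$j0"
      using finite_argmax[of "\<lambda>j. cmod (z$j) / mu$j"] by blast
    define t1 where "t1 = cmod (v$i0) / lam$i0"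
    define t2 where "t2 = cmod (z$j0) / mu$j0"
    define t where "t = max t1 t2"
    have t20: "0 \<le> t2" unfolding t2_def using mupos[of j0] by (simp add: divide_nonneg_pos)
    have t10: "0 \<le> t1" unfolding t1_def using lam[rule_format, of i0] by (simp add: divide_nonneg_pos)
    have t0: "0 \<le> t" unfolding t_def using t20 by simp
    have vb: "\<forall>i. cmod (v$i) \<le> (t *\<^sub>R lam)$i"
    proof
      fix i have "cmod (v$i) / lam$i \<le> t1" using i0 t1_def by simp
      then have "cmod (v$i) / lam$i \<le> t" unfolding t_def by linarith
      then show "cmod (v$i) \<le> (t *\<^sub>R lam)$i" using lam by (simp add: divide_le_eq)
    qed
    have zb: "\<forall>j. cmod (z$j) \<le> t * d (blk j)"
    proof
      fix j have "cmod (z$j) / mu$j \<le> t2" using j0 t2_def by simp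
      then have "cmod (z$j) / mu$j \<le> t" unfolding t_def by linarith
      then show "cmod (z$j) \<le> t * d (blk j)" using mupos[of j] mup[of j] by (simp add: divide_le_eq)
    qed
    have wb: "\<forall>j. cmod (w$j) \<le> (t *\<^sub>R mu)$j"
      using unc_bound[OF D zb t0 d] mup unfolding w_def by simp
    show "Re s < 0"
    proof (cases "t1 \<le> t2")
      case True
      then have tt: "t = t2" unfolding t_def by simp
      have "z$j0 = (cmat C *v v)$j0 + (cmat F *v w)$j0" by (subst zeq) simp
      then have "cmod (z$j0) \<le> cmod ((cmat C *v v)$j0) + cmod ((cmat F *v w)$j0)"
        by (simp add: norm_triangle_ineq)
      also have "\<dots> \<le> (C *v (t *\<^sub>R lam))$j0 + (F *v (t *\<^sub>R mu))$j0"
        using cmat_bound[OF nC vb, of j0] cmat_bound[OF nF wb, of j0] by simp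
      finally have le: "t * mu$j0 \<le> t * ((C *v lam)$j0 + (F *v mu)$j0)"
        unfolding mv_scale distrib_left using tt t2_def mupos[of j0] by simp
      show ?thesis
      proof (cases "t = 0")
        case True
        then have "v = 0" using vb by (simp add: vec_eq_iff)
        then show ?thesis using nv by simp
      next
        case False
        then have "0 < t" using t0 by simp
        then show ?thesis using le h2'[of j0] by (simp add: mult_le_cancel_left)
      qed
    next
      case False
      then have tt: "t = t1" and tpos: "0 < t" unfolding t_def using t20 by auto
      define a where "a = A$i0$i0"
      let ?R = "UNIV - {i0}"
      have Av: "(cmat A *v v)$i0 = complex_of_real a * v$i0 + (\<Sum>k\<in>?R. complex_of_real (A$i0$k) * v$k)"
        unfolding cmat_mv a_def by (simp add: sum.remove)
      have Al: "(A *v lam)$i0 = a * lam$i0 + (\<Sum>k\<in>?R. A$i0$k * lam$k)"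
        unfolding a_def by (simp add: matrix_vector_mult_def sum.remove)
      have eqx: "(s - complex_of_real a) * v$i0 = (\<Sum>k\<in>?R. complex_of_real (A$i0$k) * v$k) + (cmat E *v w)$i0"
        using veq[of i0] Av by (simp add: algebra_simps)
      have "cmod ((s - complex_of_real a) * v$i0) \<le> (\<Sum>k\<in>?R. cmod (complex_of_real (A$i0$k) * v$k)) + cmod ((cmat E *v w)$i0)"
        unfolding eqx by (rule order_trans[OF norm_triangle_ineq add_mono[OF norm_sum order_refl]])
      also have "\<dots> \<le> (\<Sum>k\<in>?R. A$i0$k * (t * lam$k)) + (E *v (t *\<^sub>R mu))$i0"
      proof (rule add_mono[OF sum_mono cmat_bound[OF nE wb]])
        fix k assume "k \<in> ?R"
        then have "0 \<le> A$i0$k" using mA by (auto simp: metzler_def)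
        then show "cmod (complex_of_real (A$i0$k) * v$k) \<le> A$i0$k * (t * lam$k)"
          using vb[rule_format, of k] by (simp add: norm_mult mult_left_mono)
      qed
      also have "\<dots> = t * ((A *v lam)$i0 - a * lam$i0 + (E *v mu)$i0)"
        unfolding mv_scale Al by (simp add: algebra_simps sum_distrib_left)
      also have "\<dots> < t * (- a * lam$i0)"
      proof -
        have "t * ((A *v lam)$i0 + (E *v mu)$i0) < 0"
          using h1[rule_format, of i0] tpos by (simp add: mult_pos_neg)
        then show ?thesis by (simp add: algebra_simps)
      qed
      finally have FF: "cmod ((s - complex_of_real a) * v$i0) < t * (- a * lam$i0)" .
      have vi0: "t * lam$i0 = cmod (v$i0)" using tt t1_def lam[rule_format, of i0] by simp
      have E1: "cmod ((s - complex_of_real a) * v$i0) = cmod (s - complex_of_real a) * (t * lam$i0)"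
        by (simp add: norm_mult vi0)
      have L1: "t * (- a * lam$i0) = (- a) * (t * lam$i0)" by simp
      have "cmod (s - complex_of_real a) * (t * lam$i0) < (- a) * (t * lam$i0)"
        using FF E1 L1 by linarith
      then have "cmod (s - complex_of_real a) < - a"
        using mult_less_cancel_right_pos[of "t * lam$i0" "cmod (s - complex_of_real a)" "- a"]
          tpos lam[rule_format, of i0] by simp
      moreover have "Re s - a \<le> cmod (s - complex_of_real a)"
        using complex_Re_le_cmod[of "s - complex_of_real a"] by simp
      ultimately show ?thesis by simp
    qed
  qed
  show ?thesis unfolding asym_stable_def using inv hur X_def by simp
qed



lemma lin_pos_limit:
  fixes b c :: real
  assumes "\<forall>t>0. 0 \<le> b + t * c"
  shows "0 \<le> b"
proof (rule ccontr)
  assume "\<not> 0 \<le> b"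
  then have b: "b < 0" by simp
  define t where "t = - b / (2 * (\<bar>c\<bar> + 1))"
  have tp: "0 < t" unfolding t_def using b by (intro divide_pos_pos) auto
  have "t * \<bar>c\<bar> \<le> t * (\<bar>c\<bar> + 1)" using tp by simp
  also have "\<dots> = - b / 2" unfolding t_def by (simp add: field_simps add_pos_nonneg)
  finally have "t * \<bar>c\<bar> \<le> - b / 2" .
  moreover have "t * c \<le> t * \<bar>c\<bar>" using tp by (simp add: mult_left_mono)
  ultimately have "b + t * c < 0" using b by linarith
  then show False using assms tp by force
qed

lemma inner_vec_real: "inner (a::real^'m::finite) x = (\<Sum>i\<in>UNIV. a$i * x$i)"
  by (simp add: inner_vec_def)

lemma gordan:
  fixes G :: "real^'m::finite^'m"
  assumes nex: "\<not> (\<exists>x. (\<forall>i. 0 < x$i) \<and> (\<forall>i. (G *v x)$i < 0))"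
  shows "\<exists>c. c \<noteq> 0 \<and> (\<forall>i. 0 \<le> c$i) \<and> (\<forall>k. 0 \<le> (c v* G)$k)"
proof -
  define S where "S = {G *v x + y | x y. (\<forall>i. 0 < x$i) \<and> (\<forall>i. 0 < y$i)}"
  have pc: "0 < u * a + v * b" if "0 < a" "0 < b" "0 \<le> u" "0 \<le> v" "u + v = 1" for u v a b :: real
    using that by (cases "u = 0") (auto intro: add_pos_nonneg)
  have cS: "convex S"
    unfolding convex_def S_def
  proof (clarify)
    fix x1 y1 x2 y2 :: "real^'m" and u v :: real
    assume h: "\<forall>i. 0 < x1$i" "\<forall>i. 0 < y1$i" "\<forall>i. 0 < x2$i" "\<forall>i. 0 < y2$i" "0 \<le> u" "0 \<le> v" "u + v = 1"
    show "\<exists>x y. u *\<^sub>R (G *v x1 + y1) + v *\<^sub>R (G *v x2 + y2) = G *v x + y \<and> (\<forall>i. 0 < x$i) \<and> (\<forall>i. 0 < y$i)"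
      apply (rule exI[of _ "u *\<^sub>R x1 + v *\<^sub>R x2"], rule exI[of _ "u *\<^sub>R y1 + v *\<^sub>R y2"])
      using h by (auto simp: matrix_vector_right_distrib matrix_vector_mult_scaleR algebra_simps intro!: pc)
  qed
  have nS: "0 \<notin> S"
  proof
    assume "0 \<in> S"
    then obtain x y where "0 = G *v x + y" "\<forall>i. 0 < x$i" "\<forall>i. 0 < y$i" unfolding S_def by blast
    then have "\<forall>i. (G *v x)$i < 0"
      by (metis add.commute add_less_same_cancel1 vector_add_component zero_index)
    with \<open>\<forall>i. 0 < x$i\<close> nex show False by blast
  qed
  obtain a where a0: "a \<noteq> 0" and aS: "\<forall>s\<in>S. 0 \<le> inner a s"
    using separating_hyperplane_set_0[OF cS nS] by blast
  define ones where "ones = ((\<chi> i. 1) :: real^'m)"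
  have key: "0 \<le> inner a (G *v x) + inner a y" if "\<forall>i. 0 < x$i" "\<forall>i. 0 < y$i" for x y
  proof -
    have "G *v x + y \<in> S" using that unfolding S_def by blast
    then have "0 \<le> inner a (G *v x + y)" using aS by blast
    then show ?thesis by (simp only: inner_add_right)
  qed
  have ax: "inner a (G *v axis k 1) = (a v* G)$k" for k
    by (simp add: inner_vec_real matrix_vector_mult_def vector_matrix_mult_def axis_def
        sum_distrib_left mult.commute if_distrib cong: if_cong)
  have ay: "inner a (axis k 1) = a$k" for k
    by (simp add: inner_vec_real axis_def if_distrib cong: if_cong)
  have c1: "0 \<le> (a v* G)$k" for k
  proof (rule lin_pos_limit[where c = "inner a (G *v ones) + inner a ones"], intro allI impI)
    fix t :: real assume t: "0 < t"
    have "0 \<le> inner a (G *v (axis k 1 + t *\<^sub>R ones)) + inner a (t *\<^sub>R ones)"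
      by (rule key) (use t in \<open>auto simp: ones_def axis_def add_pos_nonneg\<close>)
    then show "0 \<le> (a v* G)$k + t * (inner a (G *v ones) + inner a ones)"
      by (simp add: matrix_vector_right_distrib matrix_vector_mult_scaleR inner_add_right ax algebra_simps)
  qed
  have c2: "0 \<le> a$k" for k
  proof (rule lin_pos_limit[where c = "inner a (G *v ones) + inner a ones"], intro allI impI)
    fix t :: real assume t: "0 < t"
    have "0 \<le> inner a (G *v (t *\<^sub>R ones)) + inner a (axis k 1 + t *\<^sub>R ones)"
      by (rule key) (use t in \<open>auto simp: ones_def axis_def add_pos_nonneg\<close>)
    then show "0 \<le> a$k + t * (inner a (G *v ones) + inner a ones)"
      by (simp add: matrix_vector_right_distrib matrix_vector_mult_scaleR inner_add_right ay algebra_simps)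
  qed
  show ?thesis using a0 c1 c2 by (intro exI[of _ a]) blast
qed



lemma pf:
  fixes N :: "real^'m::finite^'m"
  assumes mN: "\<forall>i j. i \<noteq> j \<longrightarrow> 0 \<le> N$i$j" and y0: "\<forall>i. 0 \<le> y$i" and yn: "y \<noteq> 0"
    and Ny: "\<forall>i. 0 \<le> (N *v y)$i"
  shows "\<exists>v \<sigma>. (\<forall>i. 0 \<le> v$i) \<and> v \<noteq> 0 \<and> 0 \<le> \<sigma> \<and> N *v v = \<sigma> *\<^sub>R v"
proof -
  define c where "c = 1 + (\<Sum>i\<in>UNIV. \<bar>N$i$i\<bar>)"
  have c1: "1 \<le> c" unfolding c_def by (simp add: sum_nonneg)
  have cd: "0 \<le> c + N$i$i" for i
  proof -
    have "\<bar>N$i$i\<bar> \<le> (\<Sum>i\<in>UNIV. \<bar>N$i$i\<bar>)" by (rule member_le_sum) auto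
    then show ?thesis unfolding c_def by linarith
  qed
  define H where "H = N + c *\<^sub>R mat 1"
  have Hnn: "0 \<le> H$i$j" for i j
    using mN cd[of i] by (cases "i = j") (auto simp: H_def mat_def add.commute)
  have Hv: "H *v w = N *v w + c *\<^sub>R w" for w
    by (simp add: H_def matrix_vector_mult_add_rdistrib scaleR_matrix_vector_assoc[symmetric])
  have Hmono: "0 \<le> (H *v w)$i" if "\<forall>i. 0 \<le> w$i" for w i
    using that Hnn by (auto simp: matrix_vector_mult_def intro!: sum_nonneg)
  have comm: "N *v (H *v w) = H *v (N *v w)" for w
    by (simp add: Hv matrix_vector_right_distrib matrix_vector_mult_scaleR)
  define S where "S w = (\<Sum>i\<in>UNIV. (H *v w)$i)" for w
  define K where "K = {w. (\<forall>i. 0 \<le> w$i) \<and> (\<Sum>i\<in>UNIV. w$i) = 1 \<and> (\<forall>i. 0 \<le> (N *v w)$i)}"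
  have HK: "c * w$i \<le> (H *v w)$i" if "w \<in> K" for w i
    using that unfolding K_def Hv by auto
  have SK: "c \<le> S w" if "w \<in> K" for w
  proof -
    have "c = (\<Sum>i\<in>UNIV. c * w$i)" using that unfolding K_def by (simp add: sum_distrib_left[symmetric])
    also have "\<dots> \<le> S w" unfolding S_def by (rule sum_mono) (rule HK[OF that])
    finally show ?thesis .
  qed
  define f where "f w = (1 / S w) *\<^sub>R (H *v w)" for w
  have fK: "f w \<in> K" if w: "w \<in> K" for w
  proof -
    have Sp: "0 < S w" using SK[OF w] c1 by linarith
    have w0: "\<forall>i. 0 \<le> w$i" "\<forall>i. 0 \<le> (N *v w)$i" using w unfolding K_def by auto
    have "0 \<le> (f w)$i" for i using Hmono[OF w0(1)] Sp by (simp add: f_def)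
    moreover have "(\<Sum>i\<in>UNIV. (f w)$i) = 1"
      using Sp by (simp add: f_def S_def sum_divide_distrib[symmetric])
    moreover have "0 \<le> (N *v f w)$i" for i
      using Hmono[OF w0(2)] Sp by (simp add: f_def matrix_vector_mult_scaleR comm)
    ultimately show ?thesis unfolding K_def by blast
  qed
  have cK: "compact K"
    unfolding compact_eq_bounded_closed
  proof
    show "bounded K" unfolding bounded_iff
    proof (intro exI ballI)
      fix w assume w: "w \<in> K"
      have "norm w \<le> (\<Sum>i\<in>UNIV. \<bar>w$i\<bar>)" by (rule norm_le_l1_cart)
      also have "\<dots> = 1" using w unfolding K_def by simp
      finally show "norm w \<le> 1" .
    qed
    show "closed K" unfolding K_def
      by (intro closed_Collect_conj closed_Collect_all closed_Collect_le closed_Collect_eq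
          continuous_intros)
  qed
  have cvK: "convex K"
    unfolding convex_def K_def
    by (auto simp: matrix_vector_right_distrib matrix_vector_mult_scaleR sum.distrib
        sum_distrib_left[symmetric])
  define y' where "y' = (1 / (\<Sum>i\<in>UNIV. y$i)) *\<^sub>R y"
  have ys: "0 < (\<Sum>i\<in>UNIV. y$i)"
  proof -
    obtain i where "y$i \<noteq> 0" using yn by (auto simp: vec_eq_iff)
    then have "0 < y$i" using y0 by (simp add: order_le_neq_trans)
    then show ?thesis by (intro sum_pos2[where i=i]) (auto simp: y0)
  qed
  have "y' \<in> K"
    using ys y0 Ny unfolding K_def y'_def
    by (auto simp: matrix_vector_mult_scaleR sum_divide_distrib[symmetric])
  then have neK: "K \<noteq> {}" by blast
  have cont: "continuous_on K f"
  proof -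
    have "\<forall>w\<in>K. S w \<noteq> 0" using SK c1 by fastforce
    then show ?thesis unfolding f_def S_def
      by (intro continuous_intros) auto
  qed
  obtain w where wK: "w \<in> K" and fw: "f w = w"
    using brouwer[OF cK cvK neK cont] fK by blast
  have Sp: "0 < S w" using SK[OF wK] c1 by linarith
  have "H *v w = S w *\<^sub>R w"
  proof -
    have "S w *\<^sub>R f w = H *v w" using Sp by (simp add: f_def)
    then show ?thesis using fw by simp
  qed
  then have "N *v w = (S w - c) *\<^sub>R w" using Hv[of w] by (simp add: algebra_simps)
  moreover have "w \<noteq> 0" using wK unfolding K_def by auto
  moreover have "\<forall>i. 0 \<le> w$i" using wK unfolding K_def by auto
  ultimately show ?thesis using SK[OF wK] by (intro exI[of _ w] exI[of _ "S w - c"]) auto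
qed



definition cvec :: "real^'n \<Rightarrow> complex^'n" where
  "cvec x = (\<chi> i. complex_of_real (x$i))"

lemma cvec_nth[simp]: "cvec x $ i = complex_of_real (x$i)" by (simp add: cvec_def)

lemma cmat_nth[simp]: "cmat M $ i $ j = complex_of_real (M$i$j)" by (simp add: cmat_def)

lemma cvec_vm: "cvec x v* cmat M = cvec (x v* M)"
  by (simp add: vec_eq_iff vector_matrix_mult_def)

lemma cmat_mm: "cmat M ** cmat M' = cmat (M ** M')"
  by (simp add: vec_eq_iff matrix_matrix_mult_def)

lemma cvec_add: "cvec (x + y) = cvec x + cvec y" by (simp add: vec_eq_iff)
lemma cvec_diff: "cvec (x - y) = cvec x - cvec y" by (simp add: vec_eq_iff)
lemma cvec_scale: "cvec (a *\<^sub>R x) = complex_of_real a *s cvec x" by (simp add: vec_eq_iff)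
lemma cvec_0: "cvec x = 0 \<longleftrightarrow> x = 0" by (simp add: vec_eq_iff)

lemma mat_mv: "mat k *v w = k *s w" for w :: "'a::comm_ring_1^'n::finite"
  by (simp add: vec_eq_iff matrix_vector_mult_def mat_def if_distrib if_distribR cong del: if_weak_cong)

lemma vm_mat: "w v* mat k = k *s w" for w :: "'a::comm_ring_1^'n::finite"
  by (simp add: vec_eq_iff vector_matrix_mult_def mat_def if_distrib if_distribR mult.commute
      cong del: if_weak_cong)

lemma sum_UNIV_sum:
  "(\<Sum>x\<in>(UNIV::('a::finite + 'b::finite) set). f x) = (\<Sum>i\<in>UNIV. f (Inl i)) + (\<Sum>j\<in>UNIV. f (Inr j))"
  using sum.Plus[of "UNIV::'a set" "UNIV::'b set" f] by (simp add: o_def)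

lemma sum_group_rep:
  fixes rep :: "'q::finite \<Rightarrow> 'q" and g h :: "'q \<Rightarrow> real"
  shows "(\<Sum>j'\<in>UNIV. (\<Sum>j\<in>{j. rep j = j'}. g j) * h j') = (\<Sum>j\<in>UNIV. g j * h (rep j))"
proof -
  have "(\<Sum>j'\<in>UNIV. (\<Sum>j\<in>{j. rep j = j'}. g j) * h j') = (\<Sum>j'\<in>UNIV. (\<Sum>j\<in>{j. j \<in> UNIV \<and> rep j = j'}. g j * h (rep j)))"
  proof (rule sum.cong[OF refl])
    fix j'
    have "(\<Sum>j\<in>{j. rep j = j'}. g j) * h j' = (\<Sum>j\<in>{j. rep j = j'}. g j * h j')"
      by (rule sum_distrib_right)
    also have "\<dots> = (\<Sum>j\<in>{j. rep j = j'}. g j * h (rep j))" by (rule sum.cong) auto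
    finally show "(\<Sum>j\<in>{j. rep j = j'}. g j) * h j' = (\<Sum>j\<in>{j. j \<in> UNIV \<and> rep j = j'}. g j * h (rep j))"
      by simp
  qed
  also have "\<dots> = (\<Sum>j\<in>UNIV. g j * h (rep j))"
    by (rule sum.group) auto
  finally show ?thesis .
qed

lemma vm_scale: "x v* (k *\<^sub>R M) = k *\<^sub>R (x v* M)" for x :: "real^'a::finite" and M :: "real^'b::finite^'a"
  by (rule vector_scaleR_matrix_ac)





lemma vec_eqI': "(\<And>i. x$i = y$i) \<Longrightarrow> x = y" by (simp add: vec_eq_iff)


lemma nec:
  fixes A :: "real^'n::finite^'n" and E :: "real^'q::finite^'n" and C :: "real^'n^'q"
    and F :: "real^'q^'q" and blk :: "'q \<Rightarrow> 'b"
  assumes mA: "metzler A" and nE: "nonneg_mat E" and nC: "nonneg_mat C" and nF: "nonneg_mat F"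
    and stab: "\<forall>\<Delta>\<in>unc_set blk. asym_stable A E C F \<Delta>"
  shows "\<exists>(lam::real^'n) (d::'b \<Rightarrow> real).
        (\<forall>i. 0 < lam$i) \<and> (\<forall>k. 0 < d k) \<and>
        (let \<mu> = (\<chi> j. d (blk j)) :: real^'q in
           (\<forall>i. (A *v lam + E *v \<mu>)$i < 0) \<and>
           (\<forall>j. (C *v lam + (F - mat 1) *v \<mu>)$j < 0))"
proof (rule ccontr)
  assume nfeas: "\<not> ?thesis"
  define rep where "rep j = (SOME j'. blk j' = blk j)" for j
  have brep: "blk (rep j) = blk j" for j unfolding rep_def by (rule someI_ex) blast
  have rep_eq: "rep i = rep j \<longleftrightarrow> blk i = blk j" for i j
    using brep unfolding rep_def by metis
  define G :: "real^('n+'q)^('n+'q)" where "G = (\<chi> r c. case r of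
      Inl i \<Rightarrow> (case c of Inl k \<Rightarrow> A$i$k | Inr j' \<Rightarrow> (\<Sum>j\<in>{j. rep j = j'}. E$i$j))
    | Inr j \<Rightarrow> (case c of Inl k \<Rightarrow> C$j$k
         | Inr j' \<Rightarrow> (\<Sum>j''\<in>{j''. rep j'' = j'}. F$j$j'') - (if rep j = j' then 1 else 0)))"
  have Gx1: "(G *v x)$(Inl i) = (A *v (\<chi> i. x$(Inl i)) + E *v (\<chi> j. x$(Inr (rep j))))$i" for x i
    by (simp add: G_def matrix_vector_mult_def sum_UNIV_sum sum_group_rep)
  have Gx2: "(G *v x)$(Inr j) = (C *v (\<chi> i. x$(Inl i)) + (F - mat 1) *v (\<chi> j. x$(Inr (rep j))))$j" for x j
  proof -
    have "(G *v x)$(Inr j) = (\<Sum>k\<in>UNIV. C$j$k * x$(Inl k)) +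
       (\<Sum>j'\<in>UNIV. ((\<Sum>j''\<in>{j''. rep j'' = j'}. F$j$j'') - (if rep j = j' then 1 else 0)) * x$(Inr j'))"
      by (simp add: G_def matrix_vector_mult_def sum_UNIV_sum)
    also have "\<dots> = (\<Sum>k\<in>UNIV. C$j$k * x$(Inl k)) +
       ((\<Sum>j''\<in>UNIV. F$j$j'' * x$(Inr (rep j''))) - x$(Inr (rep j)))"
    proof -
      have e1: "(\<Sum>j'\<in>UNIV. ((\<Sum>j''\<in>{j''. rep j'' = j'}. F$j$j'') - (if rep j = j' then 1 else 0)) * x$(Inr j'))
        = (\<Sum>j'\<in>UNIV. (\<Sum>j''\<in>{j''. rep j'' = j'}. F$j$j'') * x$(Inr j')) - (\<Sum>j'\<in>UNIV. (if rep j = j' then 1 else 0) * x$(Inr j'))"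
        by (simp only: left_diff_distrib sum_subtractf)
      have e2: "(\<Sum>j'\<in>UNIV. (if rep j = j' then 1 else 0) * x$(Inr j')) = x$(Inr (rep j))"
      proof -
        have "(\<Sum>j'\<in>UNIV. (if rep j = j' then 1 else 0) * x$(Inr j')) = (\<Sum>j'\<in>UNIV. (if rep j = j' then x$(Inr j') else 0))"
          by (rule sum.cong) auto
        then show ?thesis by simp
      qed
      show ?thesis unfolding e1 e2 sum_group_rep[where rep=rep and g="\<lambda>j''. F$j$j''" and h="\<lambda>j'. x$(Inr j')"] by simp
    qed
    also have "\<dots> = (C *v (\<chi> i. x$(Inl i)) + (F - mat 1) *v (\<chi> j. x$(Inr (rep j))))$j"
      by (simp only: vector_add_component matrix_vector_mult_diff_rdistrib matrix_vector_mul_lid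
          vector_minus_component) (simp add: matrix_vector_mult_def)
    finally show ?thesis .
  qed
  have nex: "\<not> (\<exists>x. (\<forall>i. 0 < x$i) \<and> (\<forall>i. (G *v x)$i < 0))"
  proof
    assume "\<exists>x. (\<forall>i. 0 < x$i) \<and> (\<forall>i. (G *v x)$i < 0)"
    then obtain x where xp: "\<forall>i. 0 < x$i" and xn: "\<forall>i. (G *v x)$i < 0" by blast
    define d where "d k = (if \<exists>j. blk j = k then x$(Inr (SOME j. blk j = k)) else 1)" for k
    have dp: "\<forall>k. 0 < d k" using xp unfolding d_def by auto
    have mu: "(\<chi> j. d (blk j)) = (\<chi> j. x$(Inr (rep j)))"
      by (auto simp: vec_eq_iff d_def rep_def)
    have "(\<forall>i. 0 < (\<chi> i. x$(Inl i))$i) \<and> (\<forall>k. 0 < d k) \<and>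
        (let \<mu> = (\<chi> j. d (blk j)) :: real^'q in
           (\<forall>i. (A *v (\<chi> i. x$(Inl i)) + E *v \<mu>)$i < 0) \<and>
           (\<forall>j. (C *v (\<chi> i. x$(Inl i)) + (F - mat 1) *v \<mu>)$j < 0))"
    proof -
      have h1: "\<forall>i. (A *v (\<chi> i. x$(Inl i)) + E *v (\<chi> j. x$(Inr (rep j))))$i < 0"
      proof
        fix i show "(A *v (\<chi> i. x$(Inl i)) + E *v (\<chi> j. x$(Inr (rep j))))$i < 0"
          using xn[rule_format, of "Inl i"] unfolding Gx1 .
      qed
      have h2: "\<forall>j. (C *v (\<chi> i. x$(Inl i)) + (F - mat 1) *v (\<chi> j. x$(Inr (rep j))))$j < 0"
      proof
        fix j show "(C *v (\<chi> i. x$(Inl i)) + (F - mat 1) *v (\<chi> j. x$(Inr (rep j))))$j < 0"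
          using xn[rule_format, of "Inr j"] unfolding Gx2 .
      qed
      show ?thesis unfolding Let_def mu using xp dp h1 h2 by simp
    qed
    then show False using nfeas by blast
  qed
  obtain c where c0: "c \<noteq> 0" and cnn: "\<forall>i. 0 \<le> c$i" and cG: "\<forall>k. 0 \<le> (c v* G)$k"
    using gordan[OF nex] by blast
  define p :: "real^'n" where "p = (\<chi> i. c$(Inl i))"
  define r :: "real^'q" where "r = (\<chi> j. c$(Inr j))"
  define h where "h = p v* E + r v* F"
  have pnn: "0 \<le> p$i" for i using cnn by (simp add: p_def)
  have rnn: "0 \<le> r$j" for j using cnn by (simp add: r_def)
  have hnn: "0 \<le> h$j" for j
    using pnn rnn nE nF unfolding h_def nonneg_mat_def
    by (auto simp: vector_matrix_mult_def intro!: add_nonneg_nonneg sum_nonneg)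
  have cGl: "(c v* G)$(Inl k) = (p v* A)$k + (r v* C)$k" for k
    by (simp add: G_def vector_matrix_mult_def sum_UNIV_sum p_def r_def)
  have cGr: "(c v* G)$(Inr j') = (\<Sum>j\<in>{j. rep j = j'}. h$j) - (\<Sum>j\<in>{j. rep j = j'}. r$j)" for j'
  proof -
    let ?R = "{j. rep j = j'}"
    have e0: "(c v* G)$(Inr j') = (\<Sum>i\<in>UNIV. c$(Inl i) * (\<Sum>j\<in>?R. E$i$j)) +
        (\<Sum>j\<in>UNIV. c$(Inr j) * ((\<Sum>j''\<in>?R. F$j$j'') - (if rep j = j' then 1 else 0)))"
      by (simp add: G_def vector_matrix_mult_def sum_UNIV_sum)
    have ea: "(\<Sum>i\<in>UNIV. c$(Inl i) * (\<Sum>j\<in>?R. E$i$j)) = (\<Sum>j\<in>?R. (p v* E)$j)"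
      by (simp add: vector_matrix_mult_def p_def sum_distrib_left) (rule sum.swap)
    have eb1: "(\<Sum>j\<in>UNIV. c$(Inr j) * ((\<Sum>j''\<in>?R. F$j$j'') - (if rep j = j' then 1 else 0)))
        = (\<Sum>j\<in>UNIV. r$j * (\<Sum>j''\<in>?R. F$j$j'')) - (\<Sum>j\<in>UNIV. if rep j = j' then r$j else 0)"
      unfolding sum_subtractf[symmetric] by (rule sum.cong) (auto simp: r_def algebra_simps)
    have eb2: "(\<Sum>j\<in>UNIV. r$j * (\<Sum>j''\<in>?R. F$j$j'')) = (\<Sum>j\<in>?R. (r v* F)$j)"
      by (simp add: vector_matrix_mult_def sum_distrib_left) (rule sum.swap)
    have eb3: "(\<Sum>j\<in>UNIV. if rep j = j' then r$j else 0) = (\<Sum>j\<in>?R. r$j)"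
      using sum.inter_filter[of UNIV "\<lambda>j. r$j" "\<lambda>j. rep j = j'"] by simp
    show ?thesis unfolding e0 ea eb1 eb2 eb3 h_def by (simp add: sum.distrib)
  qed
  have bc: "(\<Sum>j\<in>{j. blk j = blk j0}. r$j) \<le> (\<Sum>j\<in>{j. blk j = blk j0}. h$j)" for j0
  proof -
    have "{j. rep j = rep j0} = {j. blk j = blk j0}" using rep_eq by auto
    then show ?thesis using cG[rule_format, of "Inr (rep j0)"] unfolding cGr by simp
  qed
  define s where "s k = (\<Sum>j\<in>{j. blk j = k}. r$j)" for k
  define u where "u j = (if 0 < s (blk j) then r$j / s (blk j) else (if rep j = j then 1 else 0))" for j
  define \<Delta> :: "real^'q^'q" where "\<Delta> = (\<chi> i j. if blk i = blk j then u j else 0)"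
  have snn: "0 \<le> s k" for k unfolding s_def using rnn by (simp add: sum_nonneg)
  have unn: "0 \<le> u j" for j unfolding u_def using rnn snn by simp
  have Dnn: "0 \<le> \<Delta>$i$j" for i j unfolding \<Delta>_def using unn by simp
  have usum: "(\<Sum>j\<in>{j. blk j = blk i}. u j) = 1" for i
  proof (cases "0 < s (blk i)")
    case True
    have "(\<Sum>j\<in>{j. blk j = blk i}. u j) = (\<Sum>j\<in>{j. blk j = blk i}. r$j / s (blk i))"
      by (rule sum.cong) (auto simp: u_def True)
    also have "\<dots> = s (blk i) / s (blk i)" by (simp add: sum_divide_distrib[symmetric] s_def)
    finally show ?thesis using True by simp
  next
    case False
    have "(\<Sum>j\<in>{j. blk j = blk i}. u j) = (\<Sum>j\<in>{j. blk j = blk i}. if j = rep i then 1 else 0)"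
    proof (rule sum.cong[OF refl])
      fix j assume "j \<in> {j. blk j = blk i}"
      then have bj: "blk j = blk i" by simp
      have "rep j = j \<longleftrightarrow> j = rep i"
        using rep_eq[of j i] rep_eq[of "rep i" i] brep[of i] bj by metis
      then show "u j = (if j = rep i then 1 else 0)" using False bj by (simp add: u_def)
    qed
    also have "\<dots> = 1" using brep[of i] by simp
    finally show ?thesis .
  qed
  have hD: "(h v* \<Delta>)$j = u j * (\<Sum>l\<in>{l. blk l = blk j}. h$l)" for j
  proof -
    have "(h v* \<Delta>)$j = (\<Sum>l\<in>UNIV. if blk l = blk j then h$l * u j else 0)"
      by (simp add: vector_matrix_mult_def \<Delta>_def if_distrib cong: if_cong)
    also have "\<dots> = (\<Sum>l\<in>{l. blk l = blk j}. h$l * u j)"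
      using sum.inter_filter[of UNIV "\<lambda>l. h$l * u j" "\<lambda>l. blk l = blk j"] by simp
    finally show ?thesis by (simp add: sum_distrib_left mult.commute)
  qed
  have key2: "r$j \<le> (h v* \<Delta>)$j" for j
  proof (cases "0 < s (blk j)")
    case True
    have "r$j = u j * s (blk j)" using True by (simp add: u_def)
    also have "\<dots> \<le> u j * (\<Sum>l\<in>{l. blk l = blk j}. h$l)"
      by (rule mult_left_mono[OF _ unn]) (use bc[of j] in \<open>simp add: s_def\<close>)
    finally show ?thesis unfolding hD .
  next
    case False
    then have "s (blk j) = 0" using snn[of "blk j"] by simp
    then have "r$j = 0" unfolding s_def using rnn by (simp add: sum_nonneg_eq_0_iff)
    moreover have "0 \<le> (h v* \<Delta>)$j" unfolding hD using unn hnn by (simp add: sum_nonneg)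
    ultimately show ?thesis by simp
  qed
  define N :: "real^('n+'q)^('n+'q)" where "N = (\<chi> a b. case a of
      Inl k \<Rightarrow> (case b of Inl i \<Rightarrow> A$i$k | Inr j \<Rightarrow> C$j$k)
    | Inr j \<Rightarrow> (case b of Inl i \<Rightarrow> (E ** \<Delta>)$i$j | Inr j2 \<Rightarrow> (F ** \<Delta>)$j2$j - (if j2 = j then 1 else 0)))"
  have Nv1: "(N *v y)$(Inl k) = ((\<chi> i. y$(Inl i)) v* A)$k + ((\<chi> j. y$(Inr j)) v* C)$k" for y k
    by (simp add: N_def matrix_vector_mult_def vector_matrix_mult_def sum_UNIV_sum mult.commute)
  have Nv2: "(N *v y)$(Inr j) = ((\<chi> i. y$(Inl i)) v* (E ** \<Delta>))$j + ((\<chi> j. y$(Inr j)) v* (F ** \<Delta>))$j - y$(Inr j)" for y j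
  proof -
    have "(N *v y)$(Inr j) = (\<Sum>i\<in>UNIV. (E ** \<Delta>)$i$j * y$(Inl i)) +
        (\<Sum>j2\<in>UNIV. ((F ** \<Delta>)$j2$j - (if j2 = j then 1 else 0)) * y$(Inr j2))"
      by (simp add: N_def matrix_vector_mult_def sum_UNIV_sum)
    also have "(\<Sum>j2\<in>UNIV. ((F ** \<Delta>)$j2$j - (if j2 = j then 1 else 0)) * y$(Inr j2))
        = (\<Sum>j2\<in>UNIV. (F ** \<Delta>)$j2$j * y$(Inr j2)) - (\<Sum>j2\<in>UNIV. if j2 = j then y$(Inr j2) else 0)"
      unfolding sum_subtractf[symmetric] by (rule sum.cong) (auto simp: algebra_simps)
    finally show ?thesis by (simp add: vector_matrix_mult_def mult.commute)
  qed
  have mN: "\<forall>a b. a \<noteq> b \<longrightarrow> 0 \<le> N$a$b"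
  proof (intro allI impI)
    fix a b :: "'n + 'q" assume ab: "a \<noteq> b"
    have EDnn: "0 \<le> (E ** \<Delta>)$i$j" for i j using nE Dnn
      by (auto simp: matrix_matrix_mult_def nonneg_mat_def intro!: sum_nonneg)
    have FDnn: "0 \<le> (F ** \<Delta>)$i$j" for i j using nF Dnn
      by (auto simp: matrix_matrix_mult_def nonneg_mat_def intro!: sum_nonneg)
    show "0 \<le> N$a$b"
      using ab mA nC EDnn FDnn by (cases a; cases b) (auto simp: N_def metzler_def nonneg_mat_def)
  qed
  have cp: "(\<chi> i. c$(Inl i)) = p" by (simp add: p_def)
  have cr: "(\<chi> j. c$(Inr j)) = r" by (simp add: r_def)
  have Nc: "\<forall>a. 0 \<le> (N *v c)$a"
  proof
    fix a show "0 \<le> (N *v c)$a"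
    proof (cases a)
      case (Inl k)
      then show ?thesis using cG[rule_format, of "Inl k"] unfolding Inl Nv1 cGl cp cr by simp
    next
      case (Inr j)
      have "(p v* (E ** \<Delta>))$j + (r v* (F ** \<Delta>))$j = (h v* \<Delta>)$j"
        unfolding h_def vector_matrix_mul_assoc[symmetric]
        by (simp add: vector_matrix_mult_def distrib_right sum.distrib)
      then show ?thesis using key2[of j] unfolding Inr Nv2 cp cr by (simp add: r_def)
    qed
  qed
  obtain v \<sigma> where vnn: "\<forall>i. 0 \<le> v$i" and v0: "v \<noteq> 0" and \<sigma>0: "0 \<le> \<sigma>" and Nv: "N *v v = \<sigma> *\<^sub>R v"
    using pf[OF mN cnn c0 Nc] by blast
  define vp :: "real^'n" where "vp = (\<chi> i. v$(Inl i))"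
  define vr :: "real^'q" where "vr = (\<chi> j. v$(Inr j))"
  have ea: "vp v* A + vr v* C = \<sigma> *\<^sub>R vp"
  proof (rule vec_eqI')
    fix k
    have "(N *v v)$(Inl k) = (\<sigma> *\<^sub>R v)$(Inl k)" by (simp only: Nv)
    then show "(vp v* A + vr v* C)$k = (\<sigma> *\<^sub>R vp)$k" unfolding Nv1 vp_def vr_def by simp
  qed
  have eb: "vp v* (E ** \<Delta>) + vr v* (F ** \<Delta>) = (1 + \<sigma>) *\<^sub>R vr"
  proof (rule vec_eqI')
    fix j
    have "(N *v v)$(Inr j) = (\<sigma> *\<^sub>R v)$(Inr j)" by (simp only: Nv)
    then show "(vp v* (E ** \<Delta>) + vr v* (F ** \<Delta>))$j = ((1 + \<sigma>) *\<^sub>R vr)$j"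
      unfolding Nv2 vp_def vr_def by (simp add: algebra_simps)
  qed
  define \<theta> where "\<theta> = 1 / (1 + \<sigma>)"
  have \<theta>p: "0 < \<theta>" "\<theta> \<le> 1" using \<sigma>0 unfolding \<theta>_def by auto
  define \<Delta>r where "\<Delta>r = \<theta> *\<^sub>R \<Delta>"
  have eb': "vr = vp v* (E ** \<Delta>r) + vr v* (F ** \<Delta>r)"
  proof -
    have "vp v* (E ** \<Delta>r) + vr v* (F ** \<Delta>r) = \<theta> *\<^sub>R (vp v* (E ** \<Delta>) + vr v* (F ** \<Delta>))"
      unfolding \<Delta>r_def matrix_scalar_ac scalar_matrix_assoc[symmetric] vector_scaleR_matrix_ac
      by (simp add: scaleR_add_right)
    also have "\<dots> = vr" unfolding eb using \<sigma>0 by (simp add: \<theta>_def)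
    finally show ?thesis by simp
  qed
  define Dc where "Dc = cmat \<Delta>r"
  have DcU: "Dc \<in> unc_set blk"
    unfolding unc_set_def
  proof (intro CollectI conjI allI impI)
    fix i j assume "blk i \<noteq> blk j"
    then show "Dc$i$j = 0" by (simp add: Dc_def \<Delta>r_def \<Delta>_def)
  next
    fix k i assume "blk i = k"
    have "(\<Sum>j\<in>{j. blk j = k}. cmod (Dc$i$j)) = (\<Sum>j\<in>{j. blk j = blk i}. \<theta> * u j)"
      using \<open>blk i = k\<close> \<theta>p unn by (intro sum.cong) (auto simp: Dc_def \<Delta>r_def \<Delta>_def norm_mult abs_of_nonneg less_imp_le)
    also have "\<dots> = \<theta>" by (simp add: sum_distrib_left[symmetric] usum)
    finally show "(\<Sum>j\<in>{j. blk j = k}. cmod (Dc$i$j)) \<le> 1" using \<theta>p by simp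
  qed
  define X where "X = mat 1 - cmat F ** Dc"
  define Y where "Y = matrix_inv X"
  define K where "K = cmat A + cmat E ** Dc ** Y ** cmat C"
  have as: "asym_stable A E C F Dc" using stab DcU by blast
  then have inv: "invertible X" and hur: "hurwitz K"
    unfolding asym_stable_def X_def K_def Y_def by auto
  have XY: "X ** Y = mat 1" unfolding Y_def using inv
    using someI_ex[OF inv[unfolded invertible_def]] unfolding matrix_inv_def by auto
  define P where "P = cvec vp"
  define R where "R = cvec vr"
  have cR: "R = P v* (cmat E ** Dc) + R v* (cmat F ** Dc)"
    unfolding P_def R_def Dc_def cmat_mm cvec_vm cvec_add[symmetric] using eb' by simp
  have cA: "P v* cmat A + R v* cmat C = complex_of_real \<sigma> *s P"
    unfolding P_def R_def cvec_vm cvec_add[symmetric] cvec_scale[symmetric] ea ..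
  have RX: "R v* X = P v* (cmat E ** Dc)"
  proof -
    have "R v* X = R - R v* (cmat F ** Dc)" unfolding X_def by (simp add: vector_matrix_mult_diff_rdistrib)
    also have "\<dots> = P v* (cmat E ** Dc)" using cR by (metis add_diff_cancel_right')
    finally show ?thesis .
  qed
  have R2: "R = (P v* (cmat E ** Dc)) v* Y"
  proof -
    have "R = R v* (X ** Y)" unfolding XY by simp
    also have "\<dots> = (R v* X) v* Y" by (simp add: vector_matrix_mul_assoc)
    finally show ?thesis unfolding RX .
  qed
  have PK: "P v* K = complex_of_real \<sigma> *s P"
  proof -
    have "P v* K = P v* cmat A + ((P v* (cmat E ** Dc)) v* Y) v* cmat C"
      unfolding K_def by (simp add: vector_matrix_mult_add_rdistrib vector_matrix_mul_assoc)
    also have "\<dots> = P v* cmat A + R v* cmat C" unfolding R2[symmetric] ..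
    finally show ?thesis using cA by simp
  qed
  show False
  proof (cases "P = 0")
    case True
    then have "vp = 0" unfolding P_def cvec_0 .
    have "vr \<noteq> 0"
    proof -
      obtain a where a: "v$a \<noteq> 0" using v0 by (auto simp: vec_eq_iff)
      show ?thesis
      proof (cases a)
        case (Inl i)
        then show ?thesis using a \<open>vp = 0\<close> by (simp add: vec_eq_iff vp_def)
      next
        case (Inr j)
        then show ?thesis using a by (auto simp: vec_eq_iff vr_def)
      qed
    qed
    then have "R \<noteq> 0" unfolding R_def cvec_0 .
    moreover have "R = 0" using R2 True by simp
    ultimately show False by simp
  next
    case False
    define Z where "Z = K - mat (complex_of_real \<sigma>)"
    have PZ: "P v* Z = 0" unfolding Z_def by (simp add: vector_matrix_mult_diff_rdistrib PK vm_mat)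
    have "\<not> invertible Z"
    proof
      assume "invertible Z"
      then obtain Z' where "Z ** Z' = mat 1" unfolding invertible_def by blast
      then have "P = (P v* Z) v* Z'" by (metis vector_matrix_mul_assoc vector_matrix_mul_rid)
      then show False using PZ False by simp
    qed
    then obtain w where "Z *v w = 0" "w \<noteq> 0" unfolding invertible_ker by blast
    then have "K *v w = complex_of_real \<sigma> *s w" "w \<noteq> 0"
      unfolding Z_def by (simp_all add: matrix_vector_mult_diff_rdistrib mat_mv)
    then have "Re (complex_of_real \<sigma>) < 0" using hur unfolding hurwitz_def by blast
    then show False using \<sigma>0 by simp
  qed
qed


theorem theorem5:
  fixes A :: "real^'n::finite^'n"
    and E :: "real^'q::finite^'n"
    and C :: "real^'n^'q"
    and F :: "real^'q^'q"
    and blk :: "'q \<Rightarrow> 'b"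
  assumes "metzler A" and "nonneg_mat E" and "nonneg_mat C" and "nonneg_mat F"
  shows "(\<forall>\<Delta>\<in>unc_set blk. asym_stable A E C F \<Delta>) \<longleftrightarrow>
    (\<exists>(lam::real^'n) (d::'b \<Rightarrow> real).
        (\<forall>i. 0 < lam$i) \<and> (\<forall>k. 0 < d k) \<and>
        (let \<mu> = (\<chi> j. d (blk j)) :: real^'q in
           (\<forall>i. (A *v lam + E *v \<mu>)$i < 0) \<and>
           (\<forall>j. (C *v lam + (F - mat 1) *v \<mu>)$j < 0)))"
  proof
  assume "\<forall>\<Delta>\<in>unc_set blk. asym_stable A E C F \<Delta>"
  then show "\<exists>(lam::real^'n) (d::'b \<Rightarrow> real).
        (\<forall>i. 0 < lam$i) \<and> (\<forall>k. 0 < d k) \<and>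
        (let \<mu> = (\<chi> j. d (blk j)) :: real^'q in
           (\<forall>i. (A *v lam + E *v \<mu>)$i < 0) \<and>
           (\<forall>j. (C *v lam + (F - mat 1) *v \<mu>)$j < 0))"
    by (rule nec[OF assms])
next
  assume "\<exists>(lam::real^'n) (d::'b \<Rightarrow> real).
        (\<forall>i. 0 < lam$i) \<and> (\<forall>k. 0 < d k) \<and>
        (let \<mu> = (\<chi> j. d (blk j)) :: real^'q in
           (\<forall>i. (A *v lam + E *v \<mu>)$i < 0) \<and>
           (\<forall>j. (C *v lam + (F - mat 1) *v \<mu>)$j < 0))"
  then obtain lam :: "real^'n" and d :: "'b \<Rightarrow> real" where
    l: "\<forall>i. 0 < lam$i" and d: "\<forall>k. 0 < d k"
    and h1: "\<forall>i. (A *v lam + E *v (\<chi> j. d (blk j)))$i < 0"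
    and h2: "\<forall>j. (C *v lam + (F - mat 1) *v (\<chi> j. d (blk j)))$j < 0"
    unfolding Let_def by blast
  show "\<forall>\<Delta>\<in>unc_set blk. asym_stable A E C F \<Delta>"
    using suff[OF assms l d refl h1 h2] by blast
qed

end
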